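(* Let $n\ge8$ be an integer. For every integer $k$ with $2\le k\le\lfloor n/2\rfloor-1$, the coefficient of the monomial $T_nT_{n+1-k}T_{k+1}$ in $R_{n+1}$ is $$c^{(n+1)}_{n,n+1-k,k+1}=-2(n+1)\binom{n}{k}.$$
   Context: Let $T_1,T_2,\dots$ be indeterminates, $T_\alpha=T_{\alpha_1}\cdots T_{\alpha_d}$. Define linear operators $L,H$ on monomials (constants sent to $0$): $L(T_{\alpha_1}\cdots T_{\alpha_r})=\sum_{1\le i<j\le r}T_{\alpha_1}\cdots T_{\alpha_i+1}\cdots T_{\alpha_j+1}\cdots T_{\alpha_r}$, $H(T_{\alpha_1}\cdots T_{\alpha_r})=-\frac12\sum_{k=1}^{r}\sum_{l=1}^{\alpha_k-1}\binom{\alpha_k}{l}T_{1+l}T_{1+\alpha_k-l}\prod_{i\ne k}T_{\alpha_i}$. For $n\ge2$ let $A_n=-\sum_{k=1}^{n-1}\binom{n}{k}T_{1+k}T_{1+n-k}T_n$; set $R_2=0$, $R_{n+1}=A_n+L(R_n)+H(R_n)$. $c^{(n)}_\alpha$ is the coefficient of the monomial $T_\alpha$ in $R_n$. *)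

theory Defs
  imports Complex_Main "HOL-Library.Multiset"
begin

text \<open>A polynomial in T_1, T_2, ... with rational coefficients is represented as a formal
  (unnormalised) finite sum: a list of terms (c, xs), meaning c * T_{xs!0} * ... * T_{xs!(r-1)}.\<close>

type_synonym tpoly = "(rat \<times> nat list) list"

definition pcoeff :: "tpoly \<Rightarrow> nat multiset \<Rightarrow> rat" where
  "pcoeff p \<alpha> = sum_list (map fst (filter (\<lambda>t. mset (snd t) = \<alpha>) p))"

definition Lmono :: "nat list \<Rightarrow> nat list list" where
  "Lmono xs = [xs[i := xs!i + 1, j := xs!j + 1]. i \<leftarrow> [0..<length xs], j \<leftarrow> [i+1..<length xs]]"

definition Lop :: "tpoly \<Rightarrow> tpoly" where
  "Lop p = concat (map (\<lambda>(c, xs). map (\<lambda>ys. (c, ys)) (Lmono xs)) p)"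

definition Hmono :: "nat list \<Rightarrow> (rat \<times> nat list) list" where
  "Hmono xs = [(- (1/2) * of_nat (xs!k choose l), (1 + l) # (1 + xs!k - l) # (take k xs @ drop (k+1) xs)).
                 k \<leftarrow> [0..<length xs], l \<leftarrow> [1..<xs!k]]"

definition Hop :: "tpoly \<Rightarrow> tpoly" where
  "Hop p = concat (map (\<lambda>(c, xs). map (\<lambda>(d, ys). (c * d, ys)) (Hmono xs)) p)"

definition Apoly :: "nat \<Rightarrow> tpoly" where
  "Apoly n = [(- of_nat (n choose k), [1 + k, 1 + n - k, n]). k \<leftarrow> [1..<n]]"

text \<open>R_2 = 0, R_{n+1} = A_n + L(R_n) + H(R_n) for n \<ge> 2 (R_0, R_1 are unused and set to 0).\<close>
fun Rpoly :: "nat \<Rightarrow> tpoly" where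
  "Rpoly 0 = []"
| "Rpoly (Suc n) = (if n < 2 then [] else Apoly n @ Lop (Rpoly n) @ Hop (Rpoly n))"

end

theory Submission imports Defs begin

lemma mset2_eq: "({#a,b#} = {#d,e::'a#}) \<longleftrightarrow> (a=d\<and>b=e) \<or> (a=e\<and>b=d)"
  by (auto simp: add_eq_conv_diff)

lemma mset3_eq: "({#a,b,c#} = {#d,e,f::'a#}) \<longleftrightarrow>
   (a=d\<and>b=e\<and>c=f) \<or> (a=d\<and>b=f\<and>c=e) \<or> (a=e\<and>b=d\<and>c=f) \<or> (a=e\<and>b=f\<and>c=d) \<or> (a=f\<and>b=d\<and>c=e) \<or> (a=f\<and>b=e\<and>c=d)"
proof
  assume h: "{#a,b,c#} = {#d,e,f::'a#}"
  have "a \<in># {#d,e,f#}" by (simp flip: h)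
  then consider "a=d" | "a=e" | "a=f" by auto
  then show "(a=d\<and>b=e\<and>c=f) \<or> (a=d\<and>b=f\<and>c=e) \<or> (a=e\<and>b=d\<and>c=f) \<or> (a=e\<and>b=f\<and>c=d) \<or> (a=f\<and>b=d\<and>c=e) \<or> (a=f\<and>b=e\<and>c=d)"
  proof cases
    case 1 with h have "{#b,c#} = {#e,f#}" by simp
    then show ?thesis using 1 by (auto simp: mset2_eq)
  next
    case 2 with h have "{#b,c#} = {#d,f#}" by (simp add: add_mset_commute[of d e])
    then show ?thesis using 2 by (auto simp: mset2_eq)
  next
    case 3 with h have "{#b,c#} = {#d,e#}" by (simp add: add_mset_commute)
    then show ?thesis using 3 by (auto simp: mset2_eq)
  qed
qed (auto simp: add_mset_commute)

lemma pcoeff_Nil[simp]: "pcoeff [] a = 0" by (simp add: pcoeff_def)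
lemma pcoeff_Cons[simp]: "pcoeff (t # p) a = (if mset (snd t) = a then fst t else 0) + pcoeff p a"
  by (simp add: pcoeff_def)
lemma pcoeff_append[simp]: "pcoeff (p @ q) a = pcoeff p a + pcoeff q a"
  by (simp add: pcoeff_def)

definition cntL :: "nat list \<Rightarrow> nat multiset \<Rightarrow> nat" where
  "cntL xs a = length (filter (\<lambda>ys. mset ys = a) (Lmono xs))"

lemma pcoeff_map_const: "pcoeff (map (\<lambda>ys. (c, ys)) L) a = c * of_nat (length (filter (\<lambda>ys. mset ys = a) L))"
  by (induction L) (auto simp: algebra_simps)

lemma pcoeff_Lop: "pcoeff (Lop p) a = (\<Sum>t\<leftarrow>p. fst t * of_nat (cntL (snd t) a))"
  by (induction p) (auto simp: Lop_def pcoeff_map_const cntL_def)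

definition F3 :: "nat \<Rightarrow> nat \<Rightarrow> nat \<Rightarrow> nat multiset \<Rightarrow> nat" where
 "F3 x y z a = (if {#Suc x, Suc y, z#} = a then 1 else 0) + (if {#Suc x, y, Suc z#} = a then 1 else 0) + (if {#x, Suc y, Suc z#} = a then 1 else 0)"
lemma F3_swap1: "F3 y x z a = F3 x y z a"
  unfolding F3_def by (simp add: add_mset_commute[of "Suc x" "Suc y"] add_mset_commute[of x "Suc y"] add_mset_commute[of "Suc x" y])
lemma F3_swap2: "F3 x z y a = F3 x y z a"
  unfolding F3_def by (simp add: add_mset_commute[of "Suc z" "Suc y"] add_mset_commute[of z "Suc y"] add_mset_commute[of "Suc z" y])

lemma F3_cyc1: "F3 y z x a = F3 x y z a"
  unfolding F3_def by (simp add: add_mset_commute add_ac)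
lemma F3_cyc2: "F3 z x y a = F3 x y z a"
  unfolding F3_def by (simp add: add_mset_commute add_ac)

lemma cntL3: "cntL [x,y,z] a = F3 x y z a"
  by (simp add: cntL_def Lmono_def upt_conv_Cons F3_def)

lemma length3: "length xs = 3 \<Longrightarrow> \<exists>x y z. xs = [x,y,z]"
  by (auto simp: length_Suc_conv numeral_3_eq_3)

lemma cntL_inv: assumes "mset xs = mset ys" "length xs = 3" shows "cntL xs a = cntL ys a"
proof -
  have ly: "length ys = 3" using arg_cong[OF assms(1), of size] assms(2) by (simp only: size_mset)
  from length3[OF ly] obtain a1 b1 c1 where ys: "ys = [a1,b1,c1]" by blast
  from length3[OF assms(2)] obtain x y z where xs: "xs = [x,y,z]" by blast
  have "{#x,y,z#} = {#a1,b1,c1#}" using assms(1) xs ys by simp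
  then show ?thesis unfolding xs ys cntL3 mset3_eq
    by (elim disjE conjE; simp only: F3_swap1 F3_swap2 F3_cyc1 F3_cyc2)
qed

lemma Lmono_set: "ys \<in> set (Lmono xs) \<Longrightarrow> length ys = length xs \<and> (\<forall>y\<in>set ys. \<exists>x\<in>set xs. y = x \<or> y = Suc x)"
proof -
  assume "ys \<in> set (Lmono xs)"
  then obtain i j where ij: "i < j" "j < length xs" "ys = xs[i := xs!i + 1, j := xs!j + 1]"
    by (auto simp: Lmono_def Suc_le_eq)
  have s1: "set (xs[i := xs!i + 1]) \<subseteq> insert (xs!i+1) (set xs)" by (rule set_update_subset_insert)
  have s2: "set (xs[i := xs!i + 1, j := xs!j + 1]) \<subseteq> insert (xs!j+1) (set (xs[i := xs!i + 1]))" by (rule set_update_subset_insert)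
  have sub: "set ys \<subseteq> insert (xs!j+1) (insert (xs!i+1) (set xs))"
    unfolding ij(3) using s1 s2 by blast
  have mi: "xs!i \<in> set xs" and mj: "xs!j \<in> set xs" using ij by auto
  have "\<exists>x\<in>set xs. y = x \<or> y = Suc x" if "y \<in> set ys" for y
  proof -
    have "y \<in> insert (xs!j+1) (insert (xs!i+1) (set xs))" using sub that by (rule subsetD)
    then have "y = Suc (xs!j) \<or> y = Suc (xs!i) \<or> y \<in> set xs" by simp
    then show ?thesis using mi mj by blast
  qed
  moreover have "length ys = length xs" using ij(3) by simp
  ultimately show ?thesis by blast
qed

lemma cntL_len: "size a = 3 \<Longrightarrow> length xs \<noteq> 3 \<Longrightarrow> cntL xs a = 0"
proof -
  assume a: "size a = 3" "length xs \<noteq> 3"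
  have "\<forall>ys\<in>set (Lmono xs). mset ys \<noteq> a"
  proof
    fix ys assume "ys \<in> set (Lmono xs)"
    then have "length ys = length xs" using Lmono_set by blast
    then have "size (mset ys) \<noteq> size a" using a by simp
    then show "mset ys \<noteq> a" by metis
  qed
  then show ?thesis unfolding cntL_def by (simp add: filter_empty_conv)
qed

lemma reorg:
  fixes G :: "nat multiset \<Rightarrow> rat"
  assumes "finite B" "\<forall>t\<in>set p. G (mset (snd t)) \<noteq> 0 \<longrightarrow> mset (snd t) \<in> B"
  shows "(\<Sum>t\<leftarrow>p. fst t * G (mset (snd t))) = (\<Sum>\<beta>\<in>B. G \<beta> * pcoeff p \<beta>)"
  using assms(2)
proof (induction p)
  case Nil then show ?case by simp
next
  case (Cons t p)
  have e: "(\<Sum>\<beta>\<in>B. G \<beta> * pcoeff (t#p) \<beta>) = (\<Sum>\<beta>\<in>B. (if mset (snd t) = \<beta> then G \<beta> * fst t else 0)) + (\<Sum>\<beta>\<in>B. G \<beta> * pcoeff p \<beta>)"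
  proof -
    have "\<And>\<beta>. G \<beta> * pcoeff (t#p) \<beta> = (if mset (snd t) = \<beta> then G \<beta> * fst t else 0) + G \<beta> * pcoeff p \<beta>"
      by (simp add: distrib_left)
    then show ?thesis by (simp add: sum.distrib)
  qed
  have "(\<Sum>\<beta>\<in>B. (if mset (snd t) = \<beta> then G \<beta> * fst t else 0)) = (if mset (snd t) \<in> B then G (mset (snd t)) * fst t else 0)"
    using assms(1) by (simp add: sum.delta)
  also have "\<dots> = fst t * G (mset (snd t))" using Cons.prems by auto
  finally show ?case using e Cons by simp
qed

definition Gf :: "nat multiset \<Rightarrow> nat multiset \<Rightarrow> rat" where
  "Gf a \<beta> = of_nat (cntL (sorted_list_of_multiset \<beta>) a)"

lemma cntL_G: assumes "size a = 3" shows "cntL xs a = cntL (sorted_list_of_multiset (mset xs)) a"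
proof (cases "length xs = 3")
  case True
  then show ?thesis by (intro cntL_inv) simp_all
next
  case False
  have "length (sorted_list_of_multiset (mset xs)) = length xs"
    by (metis mset_sorted_list_of_multiset size_mset)
  then show ?thesis using False assms cntL_len by metis
qed

lemma pcoeff_Lop_G: assumes "size a = 3"
  shows "pcoeff (Lop p) a = (\<Sum>t\<leftarrow>p. fst t * Gf a (mset (snd t)))"
  unfolding pcoeff_Lop Gf_def using cntL_G[OF assms] by simp

lemma Hmono_set: assumes "(d, ys) \<in> set (Hmono xs)"
  shows "length ys = Suc (length xs) \<and> (\<forall>y\<in>set ys. y \<in> set xs \<or> (2 \<le> y \<and> (\<exists>x\<in>set xs. y \<le> x)))"
proof -
  obtain k l where kl: "k < length xs" "1 \<le> l" "l < xs!k"
    "ys = (1 + l) # (1 + xs!k - l) # (take k xs @ drop (k+1) xs)"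
    using assms by (auto simp: Hmono_def)
  have mk: "xs!k \<in> set xs" using kl by simp
  have "set (take k xs @ drop (k+1) xs) \<subseteq> set xs"
    using set_take_subset set_drop_subset by (metis Un_subset_iff set_append)
  moreover have "2 \<le> 1 + l" "1 + l \<le> xs!k" "2 \<le> 1 + xs!k - l" "1 + xs!k - l \<le> xs!k" using kl by auto
  ultimately have sub: "set (take k xs @ drop (k+1) xs) \<subseteq> set xs"
    and b: "2 \<le> 1 + l" "1 + l \<le> xs!k" "2 \<le> 1 + xs!k - l" "1 + xs!k - l \<le> xs!k" by auto
  have "y \<in> set xs \<or> (2 \<le> y \<and> (\<exists>x\<in>set xs. y \<le> x))" if "y \<in> set ys" for y
  proof -
    have "y = 1 + l \<or> y = 1 + xs!k - l \<or> y \<in> set (take k xs @ drop (k+1) xs)"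
      using that kl(4) by auto
    then show ?thesis using sub b mk by blast
  qed
  moreover have "length ys = Suc (length xs)" using kl by simp
  ultimately show ?thesis by blast
qed

lemma set_Lop: "t \<in> set (Lop p) \<Longrightarrow> \<exists>c xs. (c, xs) \<in> set p \<and> snd t \<in> set (Lmono xs)"
proof -
  assume "t \<in> set (Lop p)"
  then obtain u where u: "u \<in> set p" "t \<in> set ((\<lambda>(c, xs). map (\<lambda>ys. (c, ys)) (Lmono xs)) u)"
    unfolding Lop_def set_concat set_map by blast
  obtain c xs where cu: "u = (c, xs)" by (cases u)
  have "snd t \<in> set (Lmono xs)" using u(2) unfolding cu by auto
  then show ?thesis using u(1) cu by blast
qed
lemma set_Hop: "t \<in> set (Hop p) \<Longrightarrow> \<exists>c xs d. (c, xs) \<in> set p \<and> (d, snd t) \<in> set (Hmono xs)"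
proof -
  assume "t \<in> set (Hop p)"
  then obtain u where u: "u \<in> set p" "t \<in> set ((\<lambda>(c, xs). map (\<lambda>(d, ys). (c * d, ys)) (Hmono xs)) u)"
    unfolding Hop_def set_concat set_map by blast
  obtain c xs where cu: "u = (c, xs)" by (cases u)
  have "\<exists>d. (d, snd t) \<in> set (Hmono xs)" using u(2) unfolding cu by auto
  then show ?thesis using u(1) cu by blast
qed

lemma Rpoly_inv: "\<forall>t\<in>set (Rpoly m). 3 \<le> length (snd t) \<and> (\<forall>x\<in>set (snd t). 2 \<le> x \<and> x < m)"
proof (induction m)
  case 0 then show ?case by simp
next
  case (Suc n)
  show ?case
  proof (cases "n < 2")
    case True then show ?thesis by simp
  next
    case False
    have A: "3 \<le> length (snd t) \<and> (\<forall>x\<in>set (snd t). 2 \<le> x \<and> x < Suc n)" if "t \<in> set (Apoly n)" for t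
      using that by (auto simp: Apoly_def)
    have L: "3 \<le> length (snd t) \<and> (\<forall>x\<in>set (snd t). 2 \<le> x \<and> x < Suc n)" if "t \<in> set (Lop (Rpoly n))" for t
    proof -
      from set_Lop[OF that] obtain c xs where cx: "(c, xs) \<in> set (Rpoly n)" "snd t \<in> set (Lmono xs)"
        by blast
      have h: "3 \<le> length xs" "\<forall>x\<in>set xs. 2 \<le> x \<and> x < n" using Suc.IH cx(1) by auto
      have "length (snd t) = length xs \<and> (\<forall>y\<in>set (snd t). \<exists>x\<in>set xs. y = x \<or> y = Suc x)"
        using Lmono_set[OF cx(2)] .
      then show ?thesis using h by fastforce
    qed
    have H: "3 \<le> length (snd t) \<and> (\<forall>x\<in>set (snd t). 2 \<le> x \<and> x < Suc n)" if "t \<in> set (Hop (Rpoly n))" for t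
    proof -
      from set_Hop[OF that] obtain c xs d where cx: "(c, xs) \<in> set (Rpoly n)" "(d, snd t) \<in> set (Hmono xs)"
        by blast
      have h: "3 \<le> length xs" "\<forall>x\<in>set xs. 2 \<le> x \<and> x < n" using Suc.IH cx(1) by auto
      have "length (snd t) = Suc (length xs) \<and> (\<forall>y\<in>set (snd t). y \<in> set xs \<or> (2 \<le> y \<and> (\<exists>x\<in>set xs. y \<le> x)))"
        using Hmono_set[OF cx(2)] .
      then show ?thesis using h by fastforce
    qed
    show ?thesis using A L H False by auto
  qed
qed

lemma Hop_len: "t \<in> set (Hop p) \<Longrightarrow> \<exists>s\<in>set p. length (snd t) = Suc (length (snd s))"
proof -
  assume "t \<in> set (Hop p)"
  from set_Hop[OF this] obtain c xs d where cx: "(c, xs) \<in> set p" "(d, snd t) \<in> set (Hmono xs)"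
    by blast
  show ?thesis using Hmono_set[OF cx(2)] cx(1) by force
qed

lemma pcoeff_Hop0: assumes "\<forall>t\<in>set p. 3 \<le> length (snd t)" "size a = 3"
  shows "pcoeff (Hop p) a = 0"
proof -
  have "\<forall>t\<in>set (Hop p). mset (snd t) \<noteq> a"
  proof
    fix t assume "t \<in> set (Hop p)"
    then obtain s where "s \<in> set p" "length (snd t) = Suc (length (snd s))" using Hop_len by blast
    then have "size (mset (snd t)) \<noteq> size a" using assms by force
    then show "mset (snd t) \<noteq> a" by metis
  qed
  then show ?thesis unfolding pcoeff_def by (simp add: filter_empty_conv)
qed

lemma pcoeff_map: "pcoeff (map f xs) a = (\<Sum>x\<leftarrow>xs. if mset (snd (f x)) = a then fst (f x) else 0)"
  by (induction xs) auto

lemma pcoeff_Apoly0: "pcoeff (Apoly n) a = (\<Sum>k\<leftarrow>[1..<n]. if {#1+k, 1+n-k, n#} = a then - of_nat (n choose k) else 0)"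
  unfolding Apoly_def pcoeff_map by (simp cong: if_cong)

lemma pcoeff_Apoly: "pcoeff (Apoly n) a = (\<Sum>k\<in>{1..<n}. if {#1+k, 1+n-k, n#} = a then - of_nat (n choose k) else 0)"
  unfolding pcoeff_Apoly0 sum_set_upt_conv_sum_list_nat[symmetric] by simp

lemma Acoef: assumes "5 \<le> m" "2 \<le> j" "2*j \<le> m+2"
  shows "pcoeff (Apoly m) {#m, j, m+2-j#} = - (of_nat (m choose (j-1)) + (if 2*j = m+2 then 0 else of_nat (m choose (m+1-j))))"
proof -
  have S: "{k\<in>{1..<m}. {#1+k, 1+m-k, m#} = {#m, j, m+2-j#}} = {j-1, m+1-j}"
  proof (rule set_eqI)
    fix k
    have e: "{#1+k, 1+m-k, m#} = {#m, j, m+2-j#} \<longleftrightarrow> {#1+k, 1+m-k#} = {#j, m+2-j#}"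
      by (simp add: add_mset_commute)
    show "k \<in> {k\<in>{1..<m}. {#1+k, 1+m-k, m#} = {#m, j, m+2-j#}} \<longleftrightarrow> k \<in> {j-1, m+1-j}"
      unfolding mem_Collect_eq e mset2_eq using assms by auto
  qed
  have "pcoeff (Apoly m) {#m, j, m+2-j#} = (\<Sum>k\<in>{j-1, m+1-j}. - of_nat (m choose k))"
    unfolding pcoeff_Apoly sum.inter_filter[OF finite_atLeastLessThan, symmetric] S ..
  also have "\<dots> = - (of_nat (m choose (j-1)) + (if 2*j = m+2 then 0 else of_nat (m choose (m+1-j))))"
  proof (cases "2*j = m+2")
    case True then have "j - 1 = m+1-j" by simp
    then show ?thesis using True by simp
  next
    case False then have "j - 1 \<noteq> m+1-j" by simp
    then show ?thesis using False by simp
  qed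
  finally show ?thesis .
qed

definition fC :: "nat \<Rightarrow> nat \<Rightarrow> rat" where
  "fC m j = (if j = 2 then - (of_nat m * of_nat (m-1))
     else if 2*j = m+1 then - (of_nat m * of_nat ((m-1) choose (j-1)))
     else - (2 * of_nat m * of_nat ((m-1) choose (j-1))))"

lemma pcoeff_zero: "\<forall>t\<in>set p. mset (snd t) \<noteq> b \<Longrightarrow> pcoeff p b = 0"
  unfolding pcoeff_def by (simp add: filter_empty_conv)

lemma Gf_eval: "mset xs = b \<Longrightarrow> length xs = 3 \<Longrightarrow> Gf a b = of_nat (F3 (xs!0) (xs!1) (xs!2) a)"
proof -
  assume h: "mset xs = b" "length xs = 3"
  from length3[OF h(2)] obtain x y z where xs: "xs = [x,y,z]" by blast
  have "cntL xs a = cntL (sorted_list_of_multiset b) a"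
    using h by (intro cntL_inv) simp_all
  then show ?thesis unfolding Gf_def xs cntL3 by (simp add: xs)
qed

lemma pre1:
  assumes "w < m" "{#Suc u, Suc v, w#} = {#m, j, m+2-j#}"
  shows "(u = m-1 \<and> v = j-1 \<and> w = m+2-j) \<or> (u = m-1 \<and> v = m+1-j \<and> w = j) \<or> (u = j-1 \<and> v = m-1 \<and> w = m+2-j) \<or> (u = m+1-j \<and> v = m-1 \<and> w = j)"
  using assms unfolding mset3_eq
  apply (elim disjE conjE)
  subgoal by (intro disjI1 conjI; linarith)
  subgoal by (intro disjI2 disjI1 conjI; linarith)
  subgoal by (intro disjI2 disjI1 conjI; linarith)
  subgoal by linarith
  subgoal by (intro disjI2 conjI; linarith)
  subgoal by linarith
  done


lemma pre2:
  assumes "w < m" "{#Suc u, Suc v, w#} = {#m, j, m+2-j#}"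
  shows "{#u,v,w#} = {#m-1, j-1, m+2-j#} \<or> {#u,v,w#} = {#m-1, j, m+1-j#}"
  using pre1[OF assms] by (elim disjE conjE; simp add: add_mset_commute)

lemma preimages:
  assumes "z < m" "y < m" "x < m"
    "F3 x y z {#m, j, m+2-j#} \<noteq> 0"
  shows "{#x,y,z#} = {#m-1, j-1, m+2-j#} \<or> {#x,y,z#} = {#m-1, j, m+1-j#}"
proof -
  consider "{#Suc x, Suc y, z#} = {#m, j, m+2-j#}" | "{#Suc x, Suc z, y#} = {#m, j, m+2-j#}" | "{#Suc y, Suc z, x#} = {#m, j, m+2-j#}"
    using assms(4) unfolding F3_def by (auto simp: add_mset_commute split: if_splits)
  then show ?thesis
  proof cases
    case 1 then show ?thesis using pre2[OF assms(1)] by blast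
  next
    case 2 then have "{#x,z,y#} = {#m-1, j-1, m+2-j#} \<or> {#x,z,y#} = {#m-1, j, m+1-j#}" using pre2[OF assms(2)] by blast
    then show ?thesis by (simp add: add_mset_commute)
  next
    case 3 then have "{#y,z,x#} = {#m-1, j-1, m+2-j#} \<or> {#y,z,x#} = {#m-1, j, m+1-j#}" using pre2[OF assms(3)] by blast
    then show ?thesis by (simp add: add_mset_commute)
  qed
qed

lemma F3_b1: assumes "5 \<le> m" "3 \<le> j" "2*j \<le> m+2"
  shows "F3 (m-1) (j-1) (m+2-j) {#m, j, m+2-j#} = (if j = 3 then 2 else 1)"
proof -
  have c1: "{#Suc (m-1), Suc (j-1), m+2-j#} = {#m, j, m+2-j#}" using assms by simp
  have c2: "{#Suc (m-1), j-1, Suc (m+2-j)#} \<noteq> {#m, j, m+2-j#}" unfolding mset3_eq using assms by auto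
  have c3: "({#m-1, Suc (j-1), Suc (m+2-j)#} = {#m, j, m+2-j#}) = (j = 3)" unfolding mset3_eq using assms by auto
  show ?thesis unfolding F3_def using c1 c2 c3 by simp
qed

lemma F3_b2: assumes "5 \<le> m" "2 \<le> j" "2*j \<le> m+1"
  shows "F3 (m-1) j (m+1-j) {#m, j, m+2-j#} = (if 2*j = m+1 then 2 else 1)"
proof -
  have c1: "({#Suc (m-1), Suc j, m+1-j#} = {#m, j, m+2-j#}) = (2*j = m+1)" unfolding mset3_eq using assms by auto
  have c2: "{#Suc (m-1), j, Suc (m+1-j)#} = {#m, j, m+2-j#}" using assms by (simp add: Suc_diff_le)
  have c3: "{#m-1, Suc j, Suc (m+1-j)#} \<noteq> {#m, j, m+2-j#}" unfolding mset3_eq using assms by auto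
  show ?thesis unfolding F3_def using c1 c2 c3 by simp
qed

lemma F3_mid: assumes "5 \<le> m" "2*j = m+2"
  shows "F3 (m-1) (j-1) (m+2-j) {#m, j, m+2-j#} = 1"
proof -
  have c1: "{#Suc (m-1), Suc (j-1), m+2-j#} = {#m, j, m+2-j#}" using assms by simp
  have c2: "{#Suc (m-1), j-1, Suc (m+2-j)#} \<noteq> {#m, j, m+2-j#}" unfolding mset3_eq using assms by auto
  have c3: "{#m-1, Suc (j-1), Suc (m+2-j)#} \<noteq> {#m, j, m+2-j#}" unfolding mset3_eq using assms by auto
  show ?thesis unfolding F3_def using c1 c2 c3 by simp
qed

lemma F3_j2: assumes "5 \<le> m"
  shows "F3 (m-1) 2 (m-1) {#m, 2, m#} = 1"
proof -
  have c1: "{#Suc (m-1), Suc 2, m-1#} \<noteq> {#m, 2, m#}" unfolding mset3_eq using assms by auto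
  have c2: "{#Suc (m-1), 2, Suc (m-1)#} = {#m, 2, m#}" using assms by simp
  have c3: "{#m-1, Suc 2, Suc (m-1)#} \<noteq> {#m, 2, m#}" unfolding mset3_eq using assms by auto
  show ?thesis unfolding F3_def using c1 c2 c3 by simp
qed

lemma step:
  assumes m5: "5 \<le> m"
    and IH: "\<forall>i. 2 \<le> i \<longrightarrow> 2*i \<le> m+1 \<longrightarrow> pcoeff (Rpoly m) {#m-1, i, m+1-i#} = fC m i"
    and j: "2 \<le> j" "2*j \<le> m+2"
  shows "pcoeff (Rpoly (Suc m)) {#m, j, m+2-j#} = fC (Suc m) j"
proof -
  define \<alpha> where "\<alpha> = {#m, j, m+2-j#}"
  define R where "R = Rpoly m"
  define \<beta>1 where "\<beta>1 = {#m-1, j-1, m+2-j#}"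
  define \<beta>2 where "\<beta>2 = {#m-1, j, m+1-j#}"
  have inv: "\<forall>t\<in>set R. 3 \<le> length (snd t) \<and> (\<forall>x\<in>set (snd t). 2 \<le> x \<and> x < m)"
    using Rpoly_inv unfolding R_def .
  have sz: "size \<alpha> = 3" by (simp add: \<alpha>_def)
  have RS: "Rpoly (Suc m) = Apoly m @ Lop R @ Hop R" using m5 by (simp add: R_def)
  have H0: "pcoeff (Hop R) \<alpha> = 0" using inv sz pcoeff_Hop0 by blast
  have Bcond: "\<forall>t\<in>set R. Gf \<alpha> (mset (snd t)) \<noteq> 0 \<longrightarrow> mset (snd t) \<in> {\<beta>1, \<beta>2}"
  proof (intro ballI impI)
    fix t assume t: "t \<in> set R" and g: "Gf \<alpha> (mset (snd t)) \<noteq> 0"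
    have l3: "length (snd t) = 3"
    proof (rule ccontr)
      assume "length (snd t) \<noteq> 3"
      then have "cntL (snd t) \<alpha> = 0" using cntL_len sz by blast
      then show False using g cntL_G[OF sz, of "snd t"] unfolding Gf_def by simp
    qed
    from length3[OF l3] obtain x y z where xyz: "snd t = [x,y,z]" by blast
    have b: "x < m" "y < m" "z < m" using inv t xyz by auto
    have "Gf \<alpha> (mset (snd t)) = of_nat (F3 x y z \<alpha>)"
      using Gf_eval[of "snd t" "mset (snd t)" \<alpha>] l3 xyz by simp
    then have "F3 x y z \<alpha> \<noteq> 0" using g by simp
    then have "{#x,y,z#} = \<beta>1 \<or> {#x,y,z#} = \<beta>2"
      using preimages[OF b(3) b(2) b(1)] unfolding \<alpha>_def \<beta>1_def \<beta>2_def by blast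
    then show "mset (snd t) \<in> {\<beta>1, \<beta>2}" using xyz by auto
  qed
  have Lsum: "pcoeff (Lop R) \<alpha> = (\<Sum>\<beta>\<in>{\<beta>1,\<beta>2}. Gf \<alpha> \<beta> * pcoeff R \<beta>)"
    unfolding pcoeff_Lop_G[OF sz] using reorg[OF _ Bcond] by simp
  have total: "pcoeff (Rpoly (Suc m)) \<alpha> = pcoeff (Apoly m) \<alpha> + (\<Sum>\<beta>\<in>{\<beta>1,\<beta>2}. Gf \<alpha> \<beta> * pcoeff R \<beta>)"
    using RS H0 Lsum by simp
  have Aval: "pcoeff (Apoly m) \<alpha> = - (of_nat (m choose (j-1)) + (if 2*j = m+2 then 0 else of_nat (m choose (m+1-j))))"
    using Acoef[OF m5 j] unfolding \<alpha>_def .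
  have sym: "m choose (m+1-j) = m choose (j-1)"
  proof -
    have "j - 1 \<le> m" using j m5 by simp
    then have "m choose (j-1) = m choose (m - (j-1))" by (rule binomial_symmetric)
    moreover have "m - (j-1) = m+1-j" using j m5 by simp
    ultimately show ?thesis by simp
  qed
  have pas: "(of_nat (m choose (j-1)) :: rat) = of_nat ((m-1) choose (j-2)) + of_nat ((m-1) choose (j-1))"
  proof -
    have "m = Suc (m-1)" "j - 1 = Suc (j-2)" using m5 j by auto
    then have "m choose (j-1) = ((m-1) choose (j-2)) + ((m-1) choose (Suc (j-2)))"
      by (metis binomial_Suc_Suc)
    moreover have "Suc (j-2) = j-1" using j by simp
    ultimately show ?thesis by simp
  qed
  have g2: "Gf \<alpha> \<beta>2 = (if 2*j = m+1 then 2 else 1)" if "2*j \<le> m+1"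
  proof -
    have "Gf \<alpha> \<beta>2 = of_nat (F3 (m-1) j (m+1-j) \<alpha>)"
      using Gf_eval[of "[m-1, j, m+1-j]" \<beta>2 \<alpha>] by (simp add: \<beta>2_def)
    then show ?thesis using F3_b2[OF m5 j(1) that] unfolding \<alpha>_def by simp
  qed
  have p2: "pcoeff R \<beta>2 = fC m j" if "2*j \<le> m+1"
    using IH j that unfolding R_def \<beta>2_def by blast
  show ?thesis
  proof (cases "j = 2")
    case True
    have ne: "\<beta>1 \<noteq> \<beta>2"
    proof
      assume "\<beta>1 = \<beta>2"
      moreover have "1 \<in># \<beta>1" using True by (simp add: \<beta>1_def)
      moreover have "1 \<notin># \<beta>2" using True m5 by (simp add: \<beta>2_def)
      ultimately show False by simp
    qed
    have z1: "pcoeff R \<beta>1 = 0"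
    proof (rule pcoeff_zero, intro ballI)
      fix t assume t: "t \<in> set R"
      have "1 \<notin> set (snd t)" using inv t by fastforce
      moreover have "1 \<in># \<beta>1" using True by (simp add: \<beta>1_def)
      ultimately show "mset (snd t) \<noteq> \<beta>1" by auto
    qed
    have "Gf \<alpha> \<beta>2 = 1" using g2 True m5 by simp
    moreover have "pcoeff R \<beta>2 = fC m 2" using p2 True m5 by simp
    ultimately have "(\<Sum>\<beta>\<in>{\<beta>1,\<beta>2}. Gf \<alpha> \<beta> * pcoeff R \<beta>) = fC m 2"
      using ne z1 by simp
    moreover have "pcoeff (Apoly m) \<alpha> = - (2 * of_nat m)"
      using Aval sym True m5 by simp
    ultimately have "pcoeff (Rpoly (Suc m)) \<alpha> = - (2 * of_nat m) + fC m 2" using total by simp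
    then show ?thesis using True m5 unfolding \<alpha>_def fC_def
      by (simp add: algebra_simps of_nat_diff)
  next
    case False
    note j3 = False
    show ?thesis
    proof (cases "2*j = m+2")
      case True
      have e1: "m+2-j = j" "m+1-j = j-1" using True by auto
      have eq: "\<beta>1 = \<beta>2" unfolding \<beta>1_def \<beta>2_def e1
        by (simp add: add_mset_commute)
      have "Gf \<alpha> \<beta>1 = 1"
      proof -
        have "Gf \<alpha> \<beta>1 = of_nat (F3 (m-1) (j-1) (m+2-j) \<alpha>)"
          using Gf_eval[of "[m-1, j-1, m+2-j]" \<beta>1 \<alpha>] by (simp add: \<beta>1_def)
        then show ?thesis using F3_mid[OF m5 True] unfolding \<alpha>_def by simp
      qed
      moreover have "pcoeff R \<beta>1 = fC m (j-1)"
      proof -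
        have "m+1-(j-1) = m+2-j" using j by simp
        then show ?thesis using IH[rule_format, of "j-1"] j3 j True unfolding R_def \<beta>1_def by simp
      qed
      ultimately have L: "(\<Sum>\<beta>\<in>{\<beta>1,\<beta>2}. Gf \<alpha> \<beta> * pcoeff R \<beta>) = fC m (j-1)" using eq by simp
      have fm: "fC m (j-1) = - (2 * of_nat m * of_nat ((m-1) choose (j-2)))"
      proof -
        have "j - 1 \<noteq> 2" "2*(j-1) \<noteq> m+1" using True m5 by auto
        then show ?thesis unfolding fC_def by (simp add: numeral_2_eq_2)
      qed
      have fs: "fC (Suc m) j = - (of_nat (Suc m) * of_nat (m choose (j-1)))"
        using j3 j True unfolding fC_def by simp
      have hb: "(of_nat (m choose (j-1)) :: rat) = 2 * of_nat ((m-1) choose (j-2))"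
      proof -
        have s1: "(m-1) choose (j-1) = (m-1) choose (j-2)"
        proof -
          have "j-2 \<le> m-1" using True by simp
          then have "(m-1) choose (j-2) = (m-1) choose (m-1-(j-2))" by (rule binomial_symmetric)
          moreover have "m-1-(j-2) = j-1" using True j j3 by simp
          ultimately show ?thesis by simp
        qed
        show ?thesis using pas s1 by simp
      qed
      have "pcoeff (Rpoly (Suc m)) \<alpha> = fC (Suc m) j" unfolding total Aval L fm fs hb
        using True by (simp add: algebra_simps)
      then show ?thesis unfolding \<alpha>_def .
    next
      case False
      have jm: "2*j \<le> m+1" using False j by simp
      have ne: "\<beta>1 \<noteq> \<beta>2" unfolding \<beta>1_def \<beta>2_def mset3_eq using jm j by arith
      have g1: "Gf \<alpha> \<beta>1 = (if j = 3 then 2 else 1)"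
      proof -
        have "Gf \<alpha> \<beta>1 = of_nat (F3 (m-1) (j-1) (m+2-j) \<alpha>)"
          using Gf_eval[of "[m-1, j-1, m+2-j]" \<beta>1 \<alpha>] by (simp add: \<beta>1_def)
        then show ?thesis using F3_b1[OF m5 _ j(2)] j j3 unfolding \<alpha>_def by simp
      qed
      have p1: "pcoeff R \<beta>1 = fC m (j-1)"
      proof -
        have "m+1-(j-1) = m+2-j" using j by simp
        then show ?thesis using IH[rule_format, of "j-1"] j3 j jm unfolding R_def \<beta>1_def by simp
      qed
      have t1: "Gf \<alpha> \<beta>1 * pcoeff R \<beta>1 = - (2 * of_nat m * of_nat ((m-1) choose (j-2)))"
      proof (cases "j = 3")
        case True then show ?thesis unfolding g1 p1 fC_def using m5 by (simp add: of_nat_diff)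
      next
        case False
        have "2*(j-1) \<noteq> m+1" using jm by simp
        then show ?thesis unfolding g1 p1 fC_def using False j j3 by (simp add: numeral_2_eq_2)
      qed
      have t2: "Gf \<alpha> \<beta>2 * pcoeff R \<beta>2 = - (2 * of_nat m * of_nat ((m-1) choose (j-1)))"
        unfolding g2[OF jm] p2[OF jm] fC_def using j3 by simp
      have L: "(\<Sum>\<beta>\<in>{\<beta>1,\<beta>2}. Gf \<alpha> \<beta> * pcoeff R \<beta>) = - (2 * of_nat m * of_nat (m choose (j-1)))"
        using ne t1 t2 pas by (simp add: algebra_simps)
      have fs: "fC (Suc m) j = - (2 * of_nat (Suc m) * of_nat (m choose (j-1)))"
        using j3 False unfolding fC_def by simp
      have "pcoeff (Rpoly (Suc m)) \<alpha> = fC (Suc m) j" unfolding total Aval L fs sym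
        using False by (simp add: algebra_simps)
      then show ?thesis unfolding \<alpha>_def .
    qed
  qed
qed

lemma base5: "\<forall>i. 2 \<le> i \<longrightarrow> 2*i \<le> 5+1 \<longrightarrow> pcoeff (Rpoly 5) {#5-1, i, 5+1-i#} = fC 5 i"
proof (intro allI impI)
  fix i :: nat assume "2 \<le> i" "2*i \<le> 5+1"
  then have "i = 2 \<or> i = 3" by auto
  moreover have "pcoeff (Rpoly 5) {#4,2,4#} = -20" by code_simp
  moreover have "pcoeff (Rpoly 5) {#4,3,3#} = -30" by code_simp
  ultimately show "pcoeff (Rpoly 5) {#5-1, i, 5+1-i#} = fC 5 i"
    by (auto simp: fC_def numeral_eq_Suc)
qed

lemma allC: "5 \<le> m \<Longrightarrow> \<forall>i. 2 \<le> i \<longrightarrow> 2*i \<le> m+1 \<longrightarrow> pcoeff (Rpoly m) {#m-1, i, m+1-i#} = fC m i"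
proof (induction m rule: nat_induct_at_least)
  case base then show ?case using base5 by simp
next
  case (Suc m)
  show ?case
  proof (intro allI impI)
    fix i assume i: "2 \<le> i" "2*i \<le> Suc m + 1"
    have "pcoeff (Rpoly (Suc m)) {#m, i, m+2-i#} = fC (Suc m) i"
      using step[OF Suc.hyps Suc.IH i(1)] i(2) by simp
    then show "pcoeff (Rpoly (Suc m)) {#Suc m - 1, i, Suc m + 1 - i#} = fC (Suc m) i" by simp
  qed
qed

theorem mainTheorem15:
  fixes n k :: nat
  assumes "n \<ge> 8" and "2 \<le> k" and "k \<le> n div 2 - 1"
  shows "pcoeff (Rpoly (n + 1)) {#n, n + 1 - k, k + 1#} = - 2 * of_nat (n + 1) * of_nat (n choose k)"
proof -
  have j: "2 \<le> k+1" "2*(k+1) \<le> n+2" using assms by auto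
  have n5: "5 \<le> n" using assms by simp
  have X0: "pcoeff (Rpoly (Suc n)) {#n, k+1, n+2-(k+1)#} = fC (Suc n) (k+1)"
    using step[OF n5 allC[OF n5] j] .
  have X: "pcoeff (Rpoly (n+1)) {#n, k+1, n+2-(k+1)#} = fC (Suc n) (k+1)"
    using X0 by (simp only: Suc_eq_plus1)
  have M: "{#n, n + 1 - k, k + 1#} = {#n, k+1, n+2-(k+1)#}" by (simp add: add_mset_commute)
  have F: "fC (Suc n) (k+1) = - 2 * of_nat (n + 1) * of_nat (n choose k)"
  proof -
    have "k+1 \<noteq> 2" "2*(k+1) \<noteq> Suc n + 1" using assms by auto
    then show ?thesis unfolding fC_def by (simp add: algebra_simps)
  qed
  show ?thesis unfolding M X F ..
qed

end
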